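(* Let $K$ be a field of characteristic zero, $R=K[X_1,\ldots,X_n]$, $R_{n-1}=K[X_1,\ldots,X_{n-1}]$. Let $P$ be a prime ideal of $R$ and $I$ an ideal of $R$ with $\sqrt I=P$. If $\partial_n(I)\subseteq I$ (where $\partial_n=\partial/\partial X_n$), then $P=(P\cap R_{n-1})R$. *)

theory Defs
  imports Main "HOL-Library.Poly_Mapping"
begin

text \<open>Multivariate polynomials over a coefficient ring 'a, in variables X_0, X_1, ...
  (indexed by nat), represented as finitely supported maps from monomials
  (exponent vectors, nat => nat) to coefficients.
  The paper's variables X_1..X_n correspond to indices 0..n-1.\<close>

type_synonym 'a mpoly = "(nat \<Rightarrow>\<^sub>0 nat) \<Rightarrow>\<^sub>0 'a"

definition polyring :: "nat \<Rightarrow> 'a::comm_ring_1 mpoly set" where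
  "polyring n = {p. \<forall>m \<in> Poly_Mapping.keys p. Poly_Mapping.keys m \<subseteq> {..<n}}"

definition is_ideal :: "'a::comm_ring_1 set \<Rightarrow> 'a set \<Rightarrow> bool" where
  "is_ideal R I \<longleftrightarrow> I \<subseteq> R \<and> 0 \<in> I \<and> (\<forall>a\<in>I. \<forall>b\<in>I. a + b \<in> I)
     \<and> (\<forall>r\<in>R. \<forall>a\<in>I. r * a \<in> I)"

definition is_prime_ideal :: "'a::comm_ring_1 set \<Rightarrow> 'a set \<Rightarrow> bool" where
  "is_prime_ideal R P \<longleftrightarrow> is_ideal R P \<and> P \<noteq> R
     \<and> (\<forall>a\<in>R. \<forall>b\<in>R. a * b \<in> P \<longrightarrow> a \<in> P \<or> b \<in> P)"

definition radical :: "'a::comm_ring_1 set \<Rightarrow> 'a set \<Rightarrow> 'a set" where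
  "radical R I = {f \<in> R. \<exists>k::nat. f ^ k \<in> I}"

definition ideal_generated :: "'a::comm_ring_1 set \<Rightarrow> 'a set \<Rightarrow> 'a set" where
  "ideal_generated R S = \<Inter>{J. is_ideal R J \<and> S \<subseteq> J}"

definition pderiv_var :: "nat \<Rightarrow> 'a::comm_ring_1 mpoly \<Rightarrow> 'a mpoly" where
  "pderiv_var i p = (\<Sum>m\<in>Poly_Mapping.keys p.
      Poly_Mapping.single (m - Poly_Mapping.single i 1)
        (of_nat (Poly_Mapping.lookup m i) * Poly_Mapping.lookup p m))"

end

theory Submission
  imports Defs
begin

abbreviation ee :: "nat \<Rightarrow> nat \<Rightarrow>\<^sub>0 nat" where "ee i \<equiv> Poly_Mapping.single i 1"

lemma pm_induct:
  assumes "P 0" "\<And>m c. P (Poly_Mapping.single m c)" "\<And>f g. P f \<Longrightarrow> P g \<Longrightarrow> P (f + g)"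
  shows "P p"
proof (induction p rule: Poly_Mapping.update_induct)
  case const then show ?case using assms by simp
next
  case (update f a b)
  have "Poly_Mapping.update a b f = f + Poly_Mapping.single a b"
    using update.hyps(1)
    by (intro poly_mapping_eqI) (auto simp: lookup_update lookup_add lookup_single in_keys_iff)
  then show ?case using update assms by simp
qed

lemma lookup_minus_nat: "Poly_Mapping.lookup (m - k) j = Poly_Mapping.lookup m j - Poly_Mapping.lookup (k :: _ \<Rightarrow>\<^sub>0 nat) j"
  by (rule lookup_minus)

lemma minus_ee_iff:
  assumes "Poly_Mapping.lookup m i \<ge> 1"
  shows "m - ee i = k \<longleftrightarrow> m = k + ee i"
  using assms unfolding poly_mapping_eq_iff fun_eq_iff
  by (auto simp: lookup_minus_nat lookup_add lookup_single when_def split: if_splits)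

lemma lookup_pderiv:
  "Poly_Mapping.lookup (pderiv_var i p) k =
     of_nat (Poly_Mapping.lookup k i + 1) * Poly_Mapping.lookup p (k + ee i)"
proof -
  define c where "c m = of_nat (Poly_Mapping.lookup m i) * Poly_Mapping.lookup p m" for m
  have "Poly_Mapping.lookup (pderiv_var i p) k = (\<Sum>m\<in>Poly_Mapping.keys p. if m - ee i = k then c m else 0)"
    unfolding pderiv_var_def c_def lookup_sum by (simp add: lookup_single when_def)
  also have "\<dots> = (\<Sum>m\<in>Poly_Mapping.keys p. if m = k + ee i then c m else 0)"
  proof (rule sum.cong)
    fix m assume "m \<in> Poly_Mapping.keys p"
    show "(if m - ee i = k then c m else 0) = (if m = k + ee i then c m else 0)"
    proof (cases "Poly_Mapping.lookup m i \<ge> 1")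
      case True then show ?thesis using minus_ee_iff[OF True] by simp
    next
      case False then have "Poly_Mapping.lookup m i = 0" by linarith
      then have "c m = 0" by (simp add: c_def)
      then show ?thesis by simp
    qed
  qed simp
  also have "\<dots> = c (k + ee i)"
    by (auto simp: c_def in_keys_iff)
  also have "\<dots> = of_nat (Poly_Mapping.lookup k i + 1) * Poly_Mapping.lookup p (k + ee i)"
    by (simp add: c_def lookup_add)
  finally show ?thesis .
qed

lemma pderiv_add: "pderiv_var i (p + q) = pderiv_var i p + pderiv_var i q"
  by (rule poly_mapping_eqI) (simp add: lookup_pderiv lookup_add distrib_left)

lemma pderiv_zero[simp]: "pderiv_var i 0 = 0"
  by (rule poly_mapping_eqI) (simp add: lookup_pderiv)

lemma pderiv_single:
  "pderiv_var i (Poly_Mapping.single m c) =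
     Poly_Mapping.single (m - ee i) (of_nat (Poly_Mapping.lookup m i) * c)"
proof (rule poly_mapping_eqI)
  fix k
  show "Poly_Mapping.lookup (pderiv_var i (Poly_Mapping.single m c)) k =
    Poly_Mapping.lookup (Poly_Mapping.single (m - ee i) (of_nat (Poly_Mapping.lookup m i) * c)) k"
  proof (cases "Poly_Mapping.lookup m i \<ge> 1")
    case True
    show ?thesis using minus_ee_iff[OF True, of k]
      by (auto simp: lookup_pderiv lookup_single when_def lookup_add)
  next
    case False
    then have 0: "Poly_Mapping.lookup m i = 0" by linarith
    have "m \<noteq> k + ee i" using 0 by (auto simp: lookup_add)
    then show ?thesis using 0 by (auto simp: lookup_pderiv lookup_single when_def)
  qed
qed

lemma pderiv_const[simp]: "pderiv_var i (Poly_Mapping.single 0 c) = 0"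
  by (simp add: pderiv_single)

lemma pderiv_one[simp]: "pderiv_var i 1 = 0"
  using pderiv_const[of i 1] by simp

lemma pderiv_mult_single:
  "pderiv_var i (Poly_Mapping.single a c * Poly_Mapping.single b d) =
    pderiv_var i (Poly_Mapping.single a c) * Poly_Mapping.single b d
    + Poly_Mapping.single a c * pderiv_var i (Poly_Mapping.single b d)"
proof -
  have sh: "x - ee i + y = x + y - ee i" if "Poly_Mapping.lookup x i \<noteq> 0" for x y
    using that by (intro poly_mapping_eqI) (auto simp: lookup_minus_nat lookup_add lookup_single when_def)
  have sh2: "y + (x - ee i) = y + x - ee i" if "Poly_Mapping.lookup x i \<noteq> 0" for x y
    using sh[OF that, of y] by (simp add: add.commute)
  show ?thesis
  proof (cases "Poly_Mapping.lookup a i = 0")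
    case True
    show ?thesis
    proof (cases "Poly_Mapping.lookup b i = 0")
      case True2: True
      then show ?thesis using True by (simp add: mult_single pderiv_single lookup_add)
    next
      case False
      then show ?thesis using True sh2[OF False, of a]
        by (simp add: mult_single pderiv_single lookup_add algebra_simps)
    qed
  next
    case False
    show ?thesis
    proof (cases "Poly_Mapping.lookup b i = 0")
      case True
      then show ?thesis using False sh[OF False, of b]
        by (simp add: mult_single pderiv_single lookup_add algebra_simps)
    next
      case False2: False
      then show ?thesis using False sh[OF False, of b] sh2[OF False2, of a]
        by (simp add: mult_single pderiv_single lookup_add single_add[symmetric] algebra_simps)
    qed
  qed
qed

lemma pderiv_sum: "pderiv_var i (sum f A) = (\<Sum>x\<in>A. pderiv_var i (f x))"
  by (induction A rule: infinite_finite_induct) (simp_all add: pderiv_add)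

lemma pderiv_mult_single_left:
  "pderiv_var i (Poly_Mapping.single a c * q) =
    pderiv_var i (Poly_Mapping.single a c) * q + Poly_Mapping.single a c * pderiv_var i q"
proof (induction q rule: pm_induct)
  case (3 f g)
  then show ?case by (simp add: distrib_left pderiv_add algebra_simps)
qed (simp_all add: pderiv_mult_single)

lemma pderiv_mult:
  "pderiv_var i (p * q) = pderiv_var i p * q + p * pderiv_var i q"
proof (induction p rule: pm_induct)
  case (3 f g)
  then show ?case by (simp add: distrib_right pderiv_add algebra_simps)
qed (simp_all add: pderiv_mult_single_left)

lemma pderiv_power_Suc:
  "pderiv_var i (u ^ Suc s) = of_nat (Suc s) * u ^ s * pderiv_var i u"
proof (induction s)
  case 0 then show ?case by simp
next
  case (Suc s)
  have "pderiv_var i (u ^ Suc (Suc s)) = pderiv_var i (u * u ^ Suc s)" by simp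
  also have "\<dots> = pderiv_var i u * u ^ Suc s + u * (of_nat (Suc s) * u ^ s * pderiv_var i u)"
    by (simp only: pderiv_mult Suc)
  also have "\<dots> = of_nat (Suc (Suc s)) * u ^ Suc s * pderiv_var i u"
    by (simp add: algebra_simps)
  finally show ?case .
qed

lemma pderiv_power_mult:
  "u * pderiv_var i (u ^ m) = of_nat m * u ^ m * pderiv_var i u"
proof (cases m)
  case (Suc s)
  show ?thesis unfolding Suc pderiv_power_Suc by (simp only: power_Suc algebra_simps)
qed simp

lemma polyring_single: "Poly_Mapping.keys m \<subseteq> {..<n} \<Longrightarrow> Poly_Mapping.single m c \<in> polyring n"
  by (simp add: polyring_def)

lemma polyring_const: "Poly_Mapping.single 0 c \<in> polyring n"
  by (simp add: polyring_def)

lemma polyring_of_nat: "of_nat k \<in> polyring n"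
  using polyring_const[where n=n and c="of_nat k"] by simp

lemma keys_add_nat: "Poly_Mapping.keys (a + b :: _ \<Rightarrow>\<^sub>0 nat) = Poly_Mapping.keys a \<union> Poly_Mapping.keys b"
  by (auto simp: in_keys_iff lookup_add)

lemma polyring_add: "p \<in> polyring n \<Longrightarrow> q \<in> polyring n \<Longrightarrow> p + q \<in> polyring n"
  unfolding polyring_def using keys_add[of p q] by blast

lemma polyring_mult: "p \<in> polyring n \<Longrightarrow> q \<in> polyring n \<Longrightarrow> p * q \<in> polyring n"
  unfolding polyring_def using keys_mult[of p q] by (fastforce simp: keys_add_nat)

lemma polyring_pderiv: "p \<in> polyring n \<Longrightarrow> pderiv_var i p \<in> polyring n"
proof (unfold polyring_def, safe)
  fix m j
  assume p: "\<forall>m\<in>Poly_Mapping.keys p. Poly_Mapping.keys m \<subseteq> {..<n}"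
    and m: "m \<in> Poly_Mapping.keys (pderiv_var i p)" and j: "j \<in> Poly_Mapping.keys m"
  from m have "m + ee i \<in> Poly_Mapping.keys p" by (auto simp: in_keys_iff lookup_pderiv)
  with p have "Poly_Mapping.keys (m + ee i) \<subseteq> {..<n}" by blast
  with j show "j < n" by (auto simp: keys_add_nat)
qed

lemma ideal_sub: "is_ideal R I \<Longrightarrow> x \<in> I \<Longrightarrow> x \<in> R"
  by (auto simp: is_ideal_def)

lemma ideal_add: "is_ideal R I \<Longrightarrow> x \<in> I \<Longrightarrow> y \<in> I \<Longrightarrow> x + y \<in> I"
  by (auto simp: is_ideal_def)

lemma ideal_mult: "is_ideal R I \<Longrightarrow> r \<in> R \<Longrightarrow> x \<in> I \<Longrightarrow> r * x \<in> I"
  by (auto simp: is_ideal_def)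

lemma ideal_mult2: "is_ideal R I \<Longrightarrow> r \<in> R \<Longrightarrow> x \<in> I \<Longrightarrow> x * r \<in> I"
  by (auto simp: is_ideal_def mult.commute)

lemma pideal_diff:
  assumes "is_ideal (polyring n) I" "x \<in> I" "y \<in> I"
  shows "x - y \<in> I"
proof -
  have "Poly_Mapping.single 0 (-1) * y \<in> I" by (rule ideal_mult[OF assms(1) polyring_const assms(3)])
  then have "x + Poly_Mapping.single 0 (-1) * y \<in> I" by (rule ideal_add[OF assms(1) assms(2)])
  then show ?thesis by (simp add: single_uminus)
qed

lemma pideal_cancel:
  fixes x :: "'a::field_char_0 mpoly"
  assumes "is_ideal (polyring n) I" "of_nat r * x \<in> I" "r > 0"
  shows "x \<in> I"
proof -
  have "Poly_Mapping.single 0 (1 / of_nat r) * (of_nat r * x) \<in> I"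
    by (rule ideal_mult[OF assms(1) polyring_const assms(2)])
  also have "Poly_Mapping.single 0 (1 / of_nat r) * (of_nat r * x) =
     (Poly_Mapping.single 0 (1 / of_nat r) * Poly_Mapping.single 0 (of_nat r)) * x"
    by (simp add: mult.assoc)
  also have "Poly_Mapping.single 0 (1 / of_nat r) * Poly_Mapping.single 0 (of_nat r) = (1 :: 'a mpoly)"
    using assms(3) by (simp add: mult_single del: single_of_nat)
  then have "(Poly_Mapping.single 0 (1 / of_nat r) * Poly_Mapping.single 0 (of_nat r)) * x = x" by simp
  finally show ?thesis .
qed

lemma radical_stable:
  fixes a :: "'a::field_char_0 mpoly"
  assumes I: "is_ideal (polyring n) I" and st: "\<And>x. x \<in> I \<Longrightarrow> pderiv_var i x \<in> I"
    and a: "a \<in> polyring n" and ak: "a ^ k \<in> I"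
  shows "pderiv_var i a ^ (2 * k) \<in> I"
proof -
  define b where "b = pderiv_var i a"
  have bR: "b \<in> polyring n" unfolding b_def by (rule polyring_pderiv[OF a])
  have dbR: "pderiv_var i b \<in> polyring n" by (rule polyring_pderiv[OF bR])
  have "j \<le> k \<longrightarrow> a ^ (k - j) * b ^ (2 * j) \<in> I" for j
  proof (induction j)
    case 0 then show ?case using ak by simp
  next
    case (Suc j)
    show ?case
    proof
      assume jk: "Suc j \<le> k"
      define s where "s = k - Suc j"
      have ks: "k - j = Suc s" using jk by (simp add: s_def)
      define g where "g = a ^ Suc s * b ^ (2 * j)"
      have gI: "g \<in> I" using Suc jk by (simp add: g_def ks[symmetric])
      have eq: "b * pderiv_var i g = of_nat (Suc s) * (a ^ s * b ^ (2 * Suc j)) + (of_nat (2 * j) * pderiv_var i b) * g"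
      proof -
        have "b * pderiv_var i g = b * (pderiv_var i (a ^ Suc s) * b ^ (2 * j)) + a ^ Suc s * (b * pderiv_var i (b ^ (2 * j)))"
          unfolding g_def pderiv_mult by (simp add: algebra_simps)
        also have "\<dots> = b * (of_nat (Suc s) * a ^ s * b * b ^ (2 * j)) + a ^ Suc s * (of_nat (2 * j) * b ^ (2 * j) * pderiv_var i b)"
          unfolding pderiv_power_mult pderiv_power_Suc b_def by simp
        also have "\<dots> = of_nat (Suc s) * (a ^ s * b ^ (2 * Suc j)) + (of_nat (2 * j) * pderiv_var i b) * g"
          unfolding g_def by (simp add: algebra_simps)
        finally show ?thesis .
      qed
      have "b * pderiv_var i g \<in> I" by (rule ideal_mult[OF I bR st[OF gI]])
      moreover have "(of_nat (2 * j) * pderiv_var i b) * g \<in> I"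
        by (rule ideal_mult[OF I polyring_mult[OF polyring_of_nat dbR] gI])
      ultimately have "b * pderiv_var i g - (of_nat (2 * j) * pderiv_var i b) * g \<in> I"
        by (rule pideal_diff[OF I])
      then have "of_nat (Suc s) * (a ^ s * b ^ (2 * Suc j)) \<in> I" unfolding eq by simp
      then have "a ^ s * b ^ (2 * Suc j) \<in> I" by (rule pideal_cancel[OF I]) simp
      then show "a ^ (k - Suc j) * b ^ (2 * Suc j) \<in> I" by (simp add: s_def)
    qed
  qed
  from this[of k] show ?thesis by (simp add: b_def)
qed

lemma lookup_pderiv_iter:
  "Poly_Mapping.lookup ((pderiv_var i ^^ k) p) m =
     pochhammer (of_nat (Poly_Mapping.lookup m i) + 1) k * Poly_Mapping.lookup p (m + Poly_Mapping.single i k)"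
proof (induction k arbitrary: m)
  case 0 then show ?case by simp
next
  case (Suc k)
  have e: "m + ee i + Poly_Mapping.single i k = m + Poly_Mapping.single i (Suc k)"
    by (simp add: add.assoc single_add[symmetric])
  have "Poly_Mapping.lookup ((pderiv_var i ^^ Suc k) p) m =
     of_nat (Poly_Mapping.lookup m i + 1) * Poly_Mapping.lookup ((pderiv_var i ^^ k) p) (m + ee i)"
    by (simp add: lookup_pderiv)
  also have "\<dots> = (of_nat (Poly_Mapping.lookup m i) + 1) * pochhammer (of_nat (Poly_Mapping.lookup m i) + 1 + 1) k
      * Poly_Mapping.lookup p (m + Poly_Mapping.single i (Suc k))"
    unfolding Suc e[symmetric] by (simp add: lookup_add algebra_simps)
  also have "\<dots> = pochhammer (of_nat (Poly_Mapping.lookup m i) + 1) (Suc k) * Poly_Mapping.lookup p (m + Poly_Mapping.single i (Suc k))"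
    by (simp add: pochhammer_rec)
  finally show ?case .
qed

lemma lookup_const_mult: "Poly_Mapping.lookup (Poly_Mapping.single 0 a * p) m = a * Poly_Mapping.lookup p m"
proof (induction p rule: pm_induct)
  case (2 t v) then show ?case by (simp add: mult_single lookup_single when_def)
next
  case (3 f g) then show ?case by (simp add: distrib_left lookup_add)
qed simp

lemma lookup_monom_mult: "Poly_Mapping.lookup (Poly_Mapping.single a (1::'a::comm_ring_1) * p) (a + t) = Poly_Mapping.lookup p (t::nat\<Rightarrow>\<^sub>0nat)"
proof (induction p rule: pm_induct)
  case (2 t' v) then show ?case by (simp add: mult_single lookup_single when_def)
next
  case (3 f g) then show ?case by (simp add: distrib_left lookup_add)
qed simp

lemma keys_monom_mult: "m \<in> Poly_Mapping.keys (Poly_Mapping.single a (1::'a::comm_ring_1) * p) \<Longrightarrow> \<exists>t\<in>Poly_Mapping.keys p. m = a + t"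
  using keys_mult[of "Poly_Mapping.single a (1::'a)" p] by (auto split: if_splits)

lemma iter_stable: "(\<And>x. x \<in> P \<Longrightarrow> pderiv_var i x \<in> P) \<Longrightarrow> f \<in> P \<Longrightarrow> (pderiv_var i ^^ k) f \<in> P"
  by (induction k) auto

lemma main_degree:
  fixes P :: "'a::field_char_0 mpoly set"
  assumes n: "n \<ge> 1" and P: "is_ideal (polyring n) P"
    and st: "\<And>x. x \<in> P \<Longrightarrow> pderiv_var (n - 1) x \<in> P"
  defines "J \<equiv> ideal_generated (polyring n) (P \<inter> polyring (n - 1))"
  shows "f \<in> P \<Longrightarrow> (\<forall>m\<in>Poly_Mapping.keys f. Poly_Mapping.lookup m (n - 1) \<le> d) \<Longrightarrow> f \<in> J"
proof (induction d arbitrary: f)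
  define i where "i = n - 1"
  have inn: "i < n" using n by (simp add: i_def)
  have JS: "x \<in> J" if "x \<in> P" "x \<in> polyring (n - 1)" for x
    using that unfolding J_def ideal_generated_def by blast
  have Jadd: "x + y \<in> J" if "x \<in> J" "y \<in> J" for x y
    using that unfolding J_def ideal_generated_def is_ideal_def by blast
  have Jmult: "r * x \<in> J" if "r \<in> polyring n" "x \<in> J" for r x
    using that unfolding J_def ideal_generated_def is_ideal_def by blast
  {
    case 0
    have "f \<in> polyring (n - 1)"
      unfolding polyring_def
    proof (intro CollectI ballI subsetI)
      fix m j assume m: "m \<in> Poly_Mapping.keys f" and j: "j \<in> Poly_Mapping.keys m"
      have "f \<in> polyring n" using ideal_sub[OF P 0(1)] .
      then have "j < n" using m j unfolding polyring_def by blast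
      moreover have "j \<noteq> n - 1" using 0(2) m j by (auto simp: in_keys_iff)
      ultimately show "j \<in> {..<n - 1}" by simp
    qed
    then show ?case using JS 0(1) by blast
  next
    case (Suc d)
    define k where "k = Suc d"
    have deg: "Poly_Mapping.lookup m i \<le> k" if "m \<in> Poly_Mapping.keys f" for m
      using Suc.prems(2) that by (simp add: k_def i_def)
    have fR: "f \<in> polyring n" using ideal_sub[OF P Suc.prems(1)] .
    define c where "c = Poly_Mapping.single 0 (1 / fact k) * (pderiv_var i ^^ k) f"
    have cP: "c \<in> P" unfolding c_def
      by (rule ideal_mult[OF P polyring_const iter_stable]) (use st Suc.prems(1) in \<open>auto simp: i_def\<close>)
    have lc: "Poly_Mapping.lookup c m = (1 / fact k) * pochhammer (of_nat (Poly_Mapping.lookup m i) + 1) k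
        * Poly_Mapping.lookup f (m + Poly_Mapping.single i k)" for m
      by (simp add: c_def lookup_const_mult lookup_pderiv_iter)
    have c1: "Poly_Mapping.lookup c m = 0" if "Poly_Mapping.lookup m i \<noteq> 0" for m
    proof -
      have "Poly_Mapping.lookup f (m + Poly_Mapping.single i k) = 0"
        using deg[of "m + Poly_Mapping.single i k"] that by (auto simp: in_keys_iff lookup_add)
      then show ?thesis by (simp add: lc)
    qed
    have c2: "Poly_Mapping.lookup c m = Poly_Mapping.lookup f (m + Poly_Mapping.single i k)"
      if "Poly_Mapping.lookup m i = 0" for m
      using that by (simp add: lc pochhammer_fact[symmetric])
    have cR: "c \<in> polyring (n - 1)"
      unfolding polyring_def
    proof (intro CollectI ballI subsetI)
      fix m j assume m: "m \<in> Poly_Mapping.keys c" and j: "j \<in> Poly_Mapping.keys m"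
      have mi: "Poly_Mapping.lookup m i = 0" using c1 m by (auto simp: in_keys_iff)
      then have "m + Poly_Mapping.single i k \<in> Poly_Mapping.keys f" using c2 m by (auto simp: in_keys_iff)
      then have "Poly_Mapping.keys (m + Poly_Mapping.single i k) \<subseteq> {..<n}" using fR unfolding polyring_def by blast
      then have "j < n" using j by (auto simp: keys_add_nat)
      moreover have "j \<noteq> i" using mi j by (auto simp: in_keys_iff)
      ultimately show "j \<in> {..<n - 1}" by (simp add: i_def)
    qed
    define X where "X = Poly_Mapping.single (Poly_Mapping.single i k) (1::'a)"
    have XR: "X \<in> polyring n" unfolding X_def by (rule polyring_single) (use inn in auto)
    have XcP: "X * c \<in> P" by (rule ideal_mult[OF P XR cP])
    define h where "h = f - X * c"
    have hP: "h \<in> P" unfolding h_def by (rule pideal_diff[OF P Suc.prems(1) XcP])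
    have hdeg: "\<forall>m\<in>Poly_Mapping.keys h. Poly_Mapping.lookup m (n - 1) \<le> d"
    proof (rule ballI, rule ccontr)
      fix m assume m: "m \<in> Poly_Mapping.keys h" and nd: "\<not> Poly_Mapping.lookup m (n - 1) \<le> d"
      then have mk: "Poly_Mapping.lookup m i \<ge> k" by (simp add: i_def k_def)
      have "m \<in> Poly_Mapping.keys f \<or> m \<in> Poly_Mapping.keys (X * c)"
        using m unfolding h_def by (auto simp: in_keys_iff lookup_minus)
      then have mk2: "Poly_Mapping.lookup m i = k"
      proof
        assume "m \<in> Poly_Mapping.keys f" then show ?thesis using deg mk by force
      next
        assume "m \<in> Poly_Mapping.keys (X * c)"
        then obtain t where t: "t \<in> Poly_Mapping.keys c" "m = Poly_Mapping.single i k + t"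
          using keys_monom_mult unfolding X_def by blast
        then have "Poly_Mapping.lookup t i = 0" using c1 by (auto simp: in_keys_iff)
        then show ?thesis using t by (simp add: lookup_add)
      qed
      define t where "t = m - Poly_Mapping.single i k"
      have mt: "m = Poly_Mapping.single i k + t"
        using mk2 unfolding t_def by (intro poly_mapping_eqI) (auto simp: lookup_add lookup_minus_nat lookup_single when_def)
      have ti: "Poly_Mapping.lookup t i = 0" using mk2 by (simp add: t_def lookup_minus_nat)
      have "Poly_Mapping.lookup h m = Poly_Mapping.lookup f m - Poly_Mapping.lookup c t"
        unfolding h_def lookup_minus mt X_def lookup_monom_mult ..
      also have "\<dots> = 0" using c2[OF ti] mt by (simp add: add.commute)
      finally show False using m by (simp add: in_keys_iff)
    qed
    have "h \<in> J" using Suc.IH[OF hP hdeg] .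
    moreover have "X * c \<in> J" using Jmult[OF XR JS[OF cP cR]] .
    ultimately have "h + X * c \<in> J" by (rule Jadd)
    then show ?case by (simp add: h_def)
  }
qed

theorem corollary7p3:
  fixes n :: nat and P I :: "'a::field_char_0 mpoly set"
  assumes "n \<ge> 1"
    and "is_prime_ideal (polyring n) P"
    and "is_ideal (polyring n) I"
    and "radical (polyring n) I = P"
    and "pderiv_var (n - 1) ` I \<subseteq> I"
  shows "P = ideal_generated (polyring n) (P \<inter> polyring (n - 1))"
proof
  have PI: "is_ideal (polyring n) P" using assms(2) by (simp add: is_prime_ideal_def)
  have stI: "\<And>x. x \<in> I \<Longrightarrow> pderiv_var (n - 1) x \<in> I" using assms(5) by blast
  have st: "pderiv_var (n - 1) x \<in> P" if "x \<in> P" for x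
  proof -
    from that assms(4) obtain k where xR: "x \<in> polyring n" and xk: "x ^ k \<in> I"
      by (auto simp: radical_def)
    have "pderiv_var (n - 1) x ^ (2 * k) \<in> I" by (rule radical_stable[OF assms(3) stI xR xk])
    moreover have "pderiv_var (n - 1) x \<in> polyring n" by (rule polyring_pderiv[OF xR])
    ultimately show ?thesis using assms(4) by (auto simp: radical_def)
  qed
  show "P \<subseteq> ideal_generated (polyring n) (P \<inter> polyring (n - 1))"
  proof
    fix f assume f: "f \<in> P"
    define d where "d = Max ((\<lambda>m. Poly_Mapping.lookup m (n - 1)) ` Poly_Mapping.keys f)"
    have "\<forall>m\<in>Poly_Mapping.keys f. Poly_Mapping.lookup m (n - 1) \<le> d"
      unfolding d_def by (auto intro: Max_ge)
    then show "f \<in> ideal_generated (polyring n) (P \<inter> polyring (n - 1))"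
      using main_degree[OF assms(1) PI st] f by blast
  qed
  show "ideal_generated (polyring n) (P \<inter> polyring (n - 1)) \<subseteq> P"
    unfolding ideal_generated_def using PI by blast
qed

end
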